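(* Let $P$ be a finite poset, $n\in\mathbb Z$ and $\xi\in\mathbb Z^{P^-}$. Then $T^\xi\in\omega^{(n)}$ if and only if $\xi\in S^{(n)}$. In particular $\omega^{(n)}=\bigoplus_{\xi\in S^{(n)}}\mathbb K T^\xi$.
   Context: $P^-=P\cup\{-\infty\}$ with $-\infty<z$ for all $z\in P$. For a function $\xi$ and finite $B$ in its domain, $\xi^+(B)=\sum_{b\in B}\xi(b)$. $\mathcal C(P)=\{f\in\mathbb R^P: f\ge0,\ f^+(C)\le1$ for every chain $C\}$ (chain polytope). For $f\in\mathbb Z^{P^-}$, $T^f=\prod_{x\in P^-}T_x^{f(x)}$ (Laurent monomial in indeterminates $T_x$), $\deg T^f=f(-\infty)$. For $n\in\mathbb Z$, $S^{(n)}=\{\xi\in\mathbb Z^{P^-}:\xi(x)\ge n\ \forall x\in P,\ \xi(-\infty)\ge\xi^+(C)+n$ for every maximal chain $C$ of $P\}$. $R=\mathbb K[\mathcal C(P)]=\bigoplus_{\xi\in S^{(0)}}\mathbb K T^\xi$ is the Ehrhart ring of $\mathcal C(P)$ over a field $\mathbb K$ and $\omega=\bigoplus_{\xi\in S^{(1)}}\mathbb KT^\xi$ its canonical ideal. $\omega^{(n)}$ is the $n$-th power of $\omega$ in the group of divisorial fractional ideals of $R$ (product $I\cdot J=R:_{Q(R)}(R:_{Q(R)}IJ)$); $\omega^{(0)}=R$, $\omega^{(-1)}=R:_{Q(R)}\omega$. *)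

theory Defs
  imports "HOL-Library.Poly_Mapping" "HOL-Library.Option_ord"
          "HOL-Computational_Algebra.Fraction_Field"
begin

text \<open>The linear order on the ambient type 'a is only used
 to give the Laurent polynomial ring its integral-domain instance; it plays no
 role in the mathematics. P^- is modelled as None (= -infinity) plus Some ` P.\<close>

definition Pminus :: "'a set \<Rightarrow> 'a option set" where
  "Pminus P = insert None (Some ` P)"

definition is_chain :: "'a set \<Rightarrow> 'a rel \<Rightarrow> 'a set \<Rightarrow> bool" where
  "is_chain P r C \<longleftrightarrow> C \<subseteq> P \<and> (\<forall>x\<in>C. \<forall>y\<in>C. (x,y) \<in> r \<or> (y,x) \<in> r)"

definition is_max_chain :: "'a set \<Rightarrow> 'a rel \<Rightarrow> 'a set \<Rightarrow> bool" where
  "is_max_chain P r C \<longleftrightarrow> is_chain P r C \<and> (\<forall>D. is_chain P r D \<and> C \<subseteq> D \<longrightarrow> D = C)"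

definition Sset :: "'a set \<Rightarrow> 'a rel \<Rightarrow> int \<Rightarrow> ('a option \<Rightarrow>\<^sub>0 int) set" where
  "Sset P r n = {\<xi>. Poly_Mapping.keys \<xi> \<subseteq> Pminus P \<and> (\<forall>x\<in>P. Poly_Mapping.lookup \<xi> (Some x) \<ge> n) \<and>
      (\<forall>C. is_max_chain P r C \<longrightarrow> Poly_Mapping.lookup \<xi> None \<ge> (\<Sum>x\<in>C. Poly_Mapping.lookup \<xi> (Some x)) + n)}"

text \<open>Laurent polynomials over the field 'k in the indeterminates T_x, x in P^-.\<close>
type_synonym ('a, 'k) laurent = "('a option \<Rightarrow>\<^sub>0 int) \<Rightarrow>\<^sub>0 'k"

definition Tmon :: "('a option \<Rightarrow>\<^sub>0 int) \<Rightarrow> ('a, 'k::field) laurent" where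
  "Tmon \<xi> = Poly_Mapping.single \<xi> 1"

definition mon_span :: "'a set \<Rightarrow> 'a rel \<Rightarrow> int \<Rightarrow> ('a, 'k::field) laurent set" where
  "mon_span P r n = {f. Poly_Mapping.keys f \<subseteq> Sset P r n}"

definition emb :: "('a::linorder, 'k::field) laurent \<Rightarrow> ('a, 'k) laurent fract" where
  "emb f = Fract f 1"

definition ehrhart_ring :: "'a::linorder set \<Rightarrow> 'a rel \<Rightarrow> ('a, 'k::field) laurent fract set" where
  "ehrhart_ring P r = emb ` mon_span P r 0"

definition canonical_ideal :: "'a::linorder set \<Rightarrow> 'a rel \<Rightarrow> ('a, 'k::field) laurent fract set" where
  "canonical_ideal P r = emb ` mon_span P r 1"

definition quot_field :: "'f::field set \<Rightarrow> 'f set" where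
  "quot_field R = {a / b | a b. a \<in> R \<and> b \<in> R \<and> b \<noteq> 0}"

definition colon :: "'f::field set \<Rightarrow> 'f set \<Rightarrow> 'f set" where
  "colon R I = {q \<in> quot_field R. \<forall>x\<in>I. q * x \<in> R}"

definition ideal_prod :: "'f::field set \<Rightarrow> 'f set \<Rightarrow> 'f set \<Rightarrow> 'f set" where
  "ideal_prod R I J = \<Inter>{M. 0 \<in> M \<and> {x * y | x y. x \<in> I \<and> y \<in> J} \<subseteq> M \<and>
      (\<forall>a\<in>M. \<forall>b\<in>M. a + b \<in> M) \<and> (\<forall>c\<in>R. \<forall>a\<in>M. c * a \<in> M)}"

text \<open>Product in the group of divisorial fractional ideals.\<close>
definition div_prod :: "'f::field set \<Rightarrow> 'f set \<Rightarrow> 'f set \<Rightarrow> 'f set" where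
  "div_prod R I J = colon R (colon R (ideal_prod R I J))"

primrec div_pow_nat :: "'f::field set \<Rightarrow> 'f set \<Rightarrow> nat \<Rightarrow> 'f set" where
  "div_pow_nat R I 0 = R"
| "div_pow_nat R I (Suc k) = div_prod R I (div_pow_nat R I k)"

text \<open>n-th power in the divisorial group; the inverse of I is R : I.\<close>
definition div_pow :: "'f::field set \<Rightarrow> 'f set \<Rightarrow> int \<Rightarrow> 'f set" where
  "div_pow R I n = (if n \<ge> 0 then div_pow_nat R I (nat n) else div_pow_nat R (colon R I) (nat (- n)))"

definition omega_pow :: "'a::linorder set \<Rightarrow> 'a rel \<Rightarrow> int \<Rightarrow> ('a, 'k::field) laurent fract set" where
  "omega_pow P r n = div_pow (ehrhart_ring P r) (canonical_ideal P r) n"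

end

theory Submission imports Defs begin

lemma Pminus_finite: "finite P \<Longrightarrow> finite (Pminus P)"
  by (simp add: Pminus_def)

definition fP :: "'a set \<Rightarrow> int \<Rightarrow> ('a \<Rightarrow> int) \<Rightarrow> 'a option \<Rightarrow> int" where
  "fP P N g z = (case z of None \<Rightarrow> N | Some y \<Rightarrow> if y \<in> P then g y else 0)"

definition mkP :: "'a set \<Rightarrow> int \<Rightarrow> ('a \<Rightarrow> int) \<Rightarrow> ('a option \<Rightarrow>\<^sub>0 int)" where
  "mkP P N g = Abs_poly_mapping (fP P N g)"

lemma lookup_mkP:
  assumes "finite P"
  shows "Poly_Mapping.lookup (mkP P N g) = fP P N g"
proof -
  have "{z. fP P N g z \<noteq> 0} \<subseteq> Pminus P"
  proof
    fix z assume "z \<in> {z. fP P N g z \<noteq> 0}"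
    thus "z \<in> Pminus P" by (cases z) (auto simp: fP_def Pminus_def split: if_splits)
  qed
  hence "finite {z. fP P N g z \<noteq> 0}" using Pminus_finite[OF assms] finite_subset by blast
  thus ?thesis unfolding mkP_def by simp
qed

lemma keys_mkP: "finite P \<Longrightarrow> Poly_Mapping.keys (mkP P N g) \<subseteq> Pminus P"
proof
  fix z assume "finite P" "z \<in> Poly_Mapping.keys (mkP P N g)"
  thus "z \<in> Pminus P" by (cases z) (auto simp: lookup_mkP in_keys_iff fP_def Pminus_def split: if_splits)
qed

lemma chain_sub: "is_max_chain P r C \<Longrightarrow> C \<subseteq> P"
  by (simp add: is_max_chain_def is_chain_def)

lemma chain_card: "finite P \<Longrightarrow> is_max_chain P r C \<Longrightarrow> card C \<le> card P"
  by (simp add: card_mono chain_sub)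

lemma S_add:
  assumes "\<xi> \<in> Sset P r a" "\<eta> \<in> Sset P r b"
  shows "\<xi> + \<eta> \<in> Sset P r (a + b)"
proof -
  have k: "Poly_Mapping.keys (\<xi> + \<eta>) \<subseteq> Pminus P"
    using keys_add[of \<xi> \<eta>] assms by (auto simp: Sset_def)
  have 1: "\<forall>x\<in>P. Poly_Mapping.lookup (\<xi> + \<eta>) (Some x) \<ge> a + b"
    using assms unfolding Sset_def by (simp add: lookup_add add_mono)
  have 2: "Poly_Mapping.lookup (\<xi> + \<eta>) None \<ge> (\<Sum>x\<in>C. Poly_Mapping.lookup (\<xi> + \<eta>) (Some x)) + (a + b)"
    if C: "is_max_chain P r C" for C
  proof -
    have "Poly_Mapping.lookup \<xi> None \<ge> (\<Sum>x\<in>C. Poly_Mapping.lookup \<xi> (Some x)) + a"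
      "Poly_Mapping.lookup \<eta> None \<ge> (\<Sum>x\<in>C. Poly_Mapping.lookup \<eta> (Some x)) + b"
      using assms C unfolding Sset_def by blast+
    thus ?thesis by (simp add: lookup_add sum.distrib)
  qed
  show ?thesis using k 1 2 unfolding Sset_def by blast
qed

lemma S_mono: "b \<le> a \<Longrightarrow> Sset P r a \<subseteq> Sset P r b"
  unfolding Sset_def by force

lemma U_in:
  assumes "finite P" "s \<ge> a" "N \<ge> \<bar>s\<bar> * int (card P) + a"
  shows "mkP P N (\<lambda>_. s) \<in> Sset P r a"
proof -
  { fix C assume C: "is_max_chain P r C"
    have "(\<Sum>x\<in>C. Poly_Mapping.lookup (mkP P N (\<lambda>_. s)) (Some x)) = s * int (card C)"
      using chain_sub[OF C] by (simp add: lookup_mkP[OF assms(1)] fP_def subset_iff)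
    also have "\<dots> \<le> \<bar>s\<bar> * int (card P)"
    proof -
      have "s * int (card C) \<le> \<bar>s\<bar> * int (card C)" by (simp add: mult_right_mono)
      also have "\<dots> \<le> \<bar>s\<bar> * int (card P)" using chain_card[OF assms(1) C] by (simp add: mult_left_mono)
      finally show ?thesis .
    qed
    finally have "(\<Sum>x\<in>C. Poly_Mapping.lookup (mkP P N (\<lambda>_. s)) (Some x)) + a \<le> N" using assms by linarith }
  thus ?thesis using assms keys_mkP[OF assms(1)]
    by (auto simp: Sset_def lookup_mkP fP_def)
qed

definition WC :: "'a set \<Rightarrow> 'a set \<Rightarrow> int \<Rightarrow> ('a option \<Rightarrow>\<^sub>0 int)" where
  "WC P C a = mkP P ((a + \<bar>a\<bar> * int (card P)) * int (card C) + a)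
      (\<lambda>y. if y \<in> C then a + \<bar>a\<bar> * int (card P) else a)"

lemma WC_sum:
  assumes "finite P" "D \<subseteq> P" "finite C"
  shows "(\<Sum>x\<in>D. Poly_Mapping.lookup (WC P C a) (Some x))
     = a * int (card D) + \<bar>a\<bar> * int (card P) * int (card (D \<inter> C))"
proof -
  let ?t = "\<bar>a\<bar> * int (card P)"
  have "(\<Sum>x\<in>D. Poly_Mapping.lookup (WC P C a) (Some x)) = (\<Sum>x\<in>D. a + (if x \<in> C then ?t else 0))"
    using assms(2) by (intro sum.cong) (auto simp: WC_def lookup_mkP[OF assms(1)] fP_def)
  also have "\<dots> = a * int (card D) + ?t * int (card (D \<inter> C))"
    using assms finite_subset[OF assms(2) assms(1)]
    by (simp add: sum.distrib sum.If_cases Int_def)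
  finally show ?thesis .
qed

lemma WC_in:
  assumes "finite P" "is_max_chain P r C"
  shows "WC P C a \<in> Sset P r a"
    and "Poly_Mapping.lookup (WC P C a) None = (\<Sum>x\<in>C. Poly_Mapping.lookup (WC P C a) (Some x)) + a"
proof -
  let ?t = "\<bar>a\<bar> * int (card P)"
  have CP: "C \<subseteq> P" using chain_sub[OF assms(2)] .
  have fC: "finite C" using finite_subset[OF CP assms(1)] .
  have N: "Poly_Mapping.lookup (WC P C a) None = (a + ?t) * int (card C) + a"
    by (simp add: WC_def lookup_mkP[OF assms(1)] fP_def)
  show "Poly_Mapping.lookup (WC P C a) None = (\<Sum>x\<in>C. Poly_Mapping.lookup (WC P C a) (Some x)) + a"
    using WC_sum[OF assms(1) CP fC, of a] N by (simp add: algebra_simps)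
  { fix D assume D: "is_max_chain P r D"
    have DP: "D \<subseteq> P" using chain_sub[OF D] .
    have "a * int (card D) + ?t * int (card (D \<inter> C)) + a \<le> (a + ?t) * int (card C) + a"
    proof (cases "C \<subseteq> D")
      case True
      hence "D = C" using assms(2) D unfolding is_max_chain_def by blast
      thus ?thesis by (simp add: algebra_simps)
    next
      case False
      hence "D \<inter> C \<subset> C" by blast
      hence lt: "card (D \<inter> C) < card C" using fC psubset_card_mono by blast
      have t0: "?t \<ge> 0" by simp
      have "?t * int (card (D \<inter> C)) \<le> ?t * (int (card C) - 1)"
        using lt t0 by (intro mult_left_mono) auto
      moreover have "a * (int (card D) - int (card C)) \<le> ?t"
      proof -
        have "a * (int (card D) - int (card C)) \<le> \<bar>a * (int (card D) - int (card C))\<bar>" by simp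
        also have "\<dots> = \<bar>a\<bar> * \<bar>int (card D) - int (card C)\<bar>" by (simp add: abs_mult)
        also have "\<dots> \<le> ?t"
          using chain_card[OF assms(1) D] chain_card[OF assms(1) assms(2)]
          by (intro mult_left_mono) auto
        finally show ?thesis .
      qed
      ultimately show ?thesis by (simp add: algebra_simps)
    qed
    hence "(\<Sum>x\<in>D. Poly_Mapping.lookup (WC P C a) (Some x)) + a \<le> Poly_Mapping.lookup (WC P C a) None"
      using WC_sum[OF assms(1) DP fC, of a] N by simp }
  moreover have "\<forall>x\<in>P. Poly_Mapping.lookup (WC P C a) (Some x) \<ge> a"
    by (simp add: WC_def lookup_mkP[OF assms(1)] fP_def)
  moreover have "Poly_Mapping.keys (WC P C a) \<subseteq> Pminus P"
    unfolding WC_def by (rule keys_mkP[OF assms(1)])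
  ultimately show "WC P C a \<in> Sset P r a"
    unfolding Sset_def by blast
qed

lemma S_diff:
  assumes "finite P" and H: "\<And>\<eta>. \<eta> \<in> Sset P r a \<Longrightarrow> \<zeta> + \<eta> \<in> Sset P r c"
  shows "\<zeta> \<in> Sset P r (c - a)"
proof -
  define \<eta>0 where "\<eta>0 = mkP P (\<bar>a\<bar> * int (card P) + a) (\<lambda>_. a)"
  have e0: "\<eta>0 \<in> Sset P r a" unfolding \<eta>0_def by (rule U_in[OF assms(1)]) auto
  have z0: "\<zeta> + \<eta>0 \<in> Sset P r c" using H[OF e0] .
  have "Poly_Mapping.keys \<zeta> \<subseteq> Pminus P"
  proof
    fix z assume z: "z \<in> Poly_Mapping.keys \<zeta>"
    show "z \<in> Pminus P"
    proof (rule ccontr)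
      assume "z \<notin> Pminus P"
      hence "z \<notin> Poly_Mapping.keys (\<zeta> + \<eta>0)" "z \<notin> Poly_Mapping.keys \<eta>0" using z0 e0 by (auto simp: Sset_def)
      hence "Poly_Mapping.lookup \<zeta> z = 0" by (simp add: in_keys_iff lookup_add)
      thus False using z by (simp add: in_keys_iff)
    qed
  qed
  moreover have "\<forall>x\<in>P. Poly_Mapping.lookup \<zeta> (Some x) \<ge> c - a"
  proof
    fix x assume x: "x \<in> P"
    have "Poly_Mapping.lookup (\<zeta> + \<eta>0) (Some x) \<ge> c" using z0 x by (auto simp: Sset_def)
    moreover have "Poly_Mapping.lookup \<eta>0 (Some x) = a" using x by (simp add: \<eta>0_def lookup_mkP[OF assms(1)] fP_def)
    ultimately show "Poly_Mapping.lookup \<zeta> (Some x) \<ge> c - a" by (simp add: lookup_add)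
  qed
  moreover have "\<forall>C. is_max_chain P r C \<longrightarrow>
      Poly_Mapping.lookup \<zeta> None \<ge> (\<Sum>x\<in>C. Poly_Mapping.lookup \<zeta> (Some x)) + (c - a)"
  proof (intro allI impI)
    fix C assume C: "is_max_chain P r C"
    have w: "\<zeta> + WC P C a \<in> Sset P r c" using H[OF WC_in(1)[OF assms(1) C]] .
    hence "Poly_Mapping.lookup (\<zeta> + WC P C a) None \<ge> (\<Sum>x\<in>C. Poly_Mapping.lookup (\<zeta> + WC P C a) (Some x)) + c"
      using C by (auto simp: Sset_def)
    thus "Poly_Mapping.lookup \<zeta> None \<ge> (\<Sum>x\<in>C. Poly_Mapping.lookup \<zeta> (Some x)) + (c - a)"
      using WC_in(2)[OF assms(1) C] by (simp add: lookup_add sum.distrib)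
  qed
  ultimately show ?thesis by (simp add: Sset_def)
qed

lemma emb_mult: "emb (f * g) = emb f * emb g" by (simp add: emb_def)
lemma emb_add: "emb (f + g) = emb f + emb g" by (simp add: emb_def)
lemma emb_one: "emb 1 = 1" by (simp add: emb_def One_fract_def)
lemma emb_zero: "emb 0 = 0" by (simp add: emb_def Zero_fract_def)
lemma emb_inj: "emb f = emb g \<longleftrightarrow> f = g" by (simp add: emb_def eq_fract)

lemma Tmon_mult: "Tmon a * Tmon b = (Tmon (a + b) :: ('a, 'k::field) laurent)"
  by (simp add: Tmon_def mult_single)
lemma Tmon_zero: "Tmon 0 = (1 :: ('a, 'k::field) laurent)"
  by (simp add: Tmon_def)
lemma keys_Tmon: "Poly_Mapping.keys (Tmon \<xi> :: ('a, 'k::field) laurent) = {\<xi>}"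
  by (simp add: Tmon_def)

lemma V_zero: "0 \<in> mon_span P r n" by (simp add: mon_span_def)
lemma V_add: "f \<in> mon_span P r n \<Longrightarrow> g \<in> mon_span P r n \<Longrightarrow> f + g \<in> mon_span P r n"
  using keys_add[of f g] by (auto simp: mon_span_def)
lemma V_mult:
  assumes "f \<in> mon_span P r a" "g \<in> mon_span P r b"
  shows "(f * g :: ('a, 'k::field) laurent) \<in> mon_span P r (a + b)"
proof -
  have "Poly_Mapping.keys (f * g) \<subseteq> Sset P r (a + b)"
  proof
    fix z assume "z \<in> Poly_Mapping.keys (f * g)"
    then obtain u v where "z = u + v" "u \<in> Poly_Mapping.keys f" "v \<in> Poly_Mapping.keys g"
      using keys_mult[of f g] by blast
    thus "z \<in> Sset P r (a + b)" using assms S_add unfolding mon_span_def by blast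
  qed
  thus ?thesis by (simp add: mon_span_def)
qed
lemma Tmon_V: "\<xi> \<in> Sset P r n \<Longrightarrow> (Tmon \<xi> :: ('a, 'k::field) laurent) \<in> mon_span P r n"
  by (simp add: mon_span_def keys_Tmon)

definition EE :: "'a::linorder set \<Rightarrow> 'a rel \<Rightarrow> int \<Rightarrow> ('a, 'k::field) laurent fract set" where
  "EE P r n = emb ` mon_span P r n"

lemma E_zero: "0 \<in> EE P r n"
  unfolding EE_def by (rule image_eqI[where x=0]) (simp_all add: emb_zero V_zero)
lemma E_add: "x \<in> EE P r n \<Longrightarrow> y \<in> EE P r n \<Longrightarrow> x + y \<in> EE P r n"
proof -
  assume "x \<in> EE P r n" "y \<in> EE P r n"
  then obtain f g where "f \<in> mon_span P r n" "g \<in> mon_span P r n" "x = emb f" "y = emb g" unfolding EE_def by blast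
  thus ?thesis using V_add[of f P r n g] emb_add[of f g] unfolding EE_def by (metis image_eqI)
qed
lemma E_mult: "x \<in> EE P r a \<Longrightarrow> y \<in> EE P r b \<Longrightarrow> x * y \<in> EE P r (a + b)"
proof -
  assume "x \<in> EE P r a" "y \<in> EE P r b"
  then obtain f g where "f \<in> mon_span P r a" "g \<in> mon_span P r b" "x = emb f" "y = emb g" unfolding EE_def by blast
  thus ?thesis using V_mult[of f P r a g b] emb_mult[of f g] unfolding EE_def by (metis image_eqI)
qed

lemma keys_shift:
  fixes h :: "('a::linorder, 'k::field) laurent"
  assumes "\<zeta> \<in> Poly_Mapping.keys h"
  shows "\<zeta> + \<eta> \<in> Poly_Mapping.keys (h * Tmon \<eta>)"
proof -
  have eq: "(h * Tmon \<eta>) * Tmon (- \<eta>) = h"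
    by (simp add: mult.assoc Tmon_mult Tmon_zero)
  have "\<zeta> \<in> Poly_Mapping.keys ((h * Tmon \<eta>) * Tmon (- \<eta>))" using assms by (simp only: eq)
  then obtain w b where "\<zeta> = w + b" "w \<in> Poly_Mapping.keys (h * Tmon \<eta>)" "b \<in> Poly_Mapping.keys (Tmon (- \<eta>) :: ('a, 'k) laurent)"
    using keys_mult by blast
  thus ?thesis by (simp add: keys_Tmon)
qed

lemma E_key:
  fixes q :: "('a::linorder, 'k::field) laurent fract"
  assumes fin: "finite P" and H: "\<And>x. x \<in> EE P r a \<Longrightarrow> q * x \<in> EE P r c"
  shows "q \<in> EE P r (c - a)"
proof -
  define \<eta>0 where "\<eta>0 = mkP P (\<bar>a\<bar> * int (card P) + a) (\<lambda>_. a)"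
  have e0: "\<eta>0 \<in> Sset P r a" unfolding \<eta>0_def by (rule U_in[OF fin]) auto
  have "emb (Tmon \<eta>0 :: ('a, 'k) laurent) \<in> EE P r a" unfolding EE_def using Tmon_V[OF e0] by blast
  from H[OF this] obtain g where g: "g \<in> mon_span P r c" "q * emb (Tmon \<eta>0) = emb g"
    unfolding EE_def by blast
  define h where "h = g * Tmon (- \<eta>0)"
  have qh: "q = emb h"
  proof -
    have "q = q * emb (Tmon \<eta>0 * Tmon (- \<eta>0))" by (simp add: Tmon_mult Tmon_zero emb_one)
    also have "\<dots> = emb h" by (simp add: h_def emb_mult g(2)[symmetric] mult.assoc)
    finally show ?thesis .
  qed
  have "Poly_Mapping.keys h \<subseteq> Sset P r (c - a)"
  proof
    fix \<zeta> assume z: "\<zeta> \<in> Poly_Mapping.keys h"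
    show "\<zeta> \<in> Sset P r (c - a)"
    proof (rule S_diff[OF fin])
      fix \<eta> assume e: "\<eta> \<in> Sset P r a"
      have "emb (Tmon \<eta> :: ('a, 'k) laurent) \<in> EE P r a" unfolding EE_def using Tmon_V[OF e] by blast
      from H[OF this] obtain f where f: "f \<in> mon_span P r c" "q * emb (Tmon \<eta>) = emb f"
        unfolding EE_def by blast
      hence "h * Tmon \<eta> = f" using qh by (simp add: emb_mult[symmetric] emb_inj)
      thus "\<zeta> + \<eta> \<in> Sset P r c" using keys_shift[OF z, of \<eta>] f(1) by (auto simp: mon_span_def)
    qed
  qed
  thus ?thesis using qh unfolding EE_def mon_span_def by blast
qed

lemma Tmon_nonzero: "emb (Tmon \<xi> :: ('a::linorder, 'k::field) laurent) \<noteq> 0"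
  by (metis emb_inj emb_zero keys_Tmon keys_zero empty_not_insert)

lemma E_quot:
  assumes fin: "finite P"
  shows "EE P r m \<subseteq> quot_field (EE P r 0 :: ('a::linorder, 'k::field) laurent fract set)"
proof
  fix x :: "('a, 'k) laurent fract" assume "x \<in> EE P r m"
  define \<mu> where "\<mu> = mkP P (\<bar>m\<bar> * int (card P) + \<bar>m\<bar>) (\<lambda>_. \<bar>m\<bar>)"
  have mu: "\<mu> \<in> Sset P r \<bar>m\<bar>" unfolding \<mu>_def by (rule U_in[OF fin]) auto
  have T: "(Tmon \<mu> :: ('a, 'k) laurent) \<in> mon_span P r 0"
    using Tmon_V[OF mu] S_mono[of 0 "\<bar>m\<bar>" P r] by (auto simp: mon_span_def)
  have "x * emb (Tmon \<mu>) \<in> EE P r (m + \<bar>m\<bar>)"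
    using E_mult[OF \<open>x \<in> EE P r m\<close>, of "emb (Tmon \<mu>)" "\<bar>m\<bar>"] Tmon_V[OF mu] unfolding EE_def by blast
  then obtain f where f: "f \<in> mon_span P r (m + \<bar>m\<bar>)" "x * emb (Tmon \<mu>) = emb f"
    unfolding EE_def by blast
  have "m + \<bar>m\<bar> \<ge> 0" by simp
  hence "Sset P r (m + \<bar>m\<bar>) \<subseteq> Sset P r 0" by (rule S_mono)
  hence "f \<in> mon_span P r 0" using f(1) unfolding mon_span_def by blast
  hence A: "x * emb (Tmon \<mu>) \<in> EE P r 0" using f(2) unfolding EE_def by blast
  have B: "emb (Tmon \<mu> :: ('a, 'k) laurent) \<in> EE P r 0" using T unfolding EE_def by blast
  have nz: "emb (Tmon \<mu> :: ('a, 'k) laurent) \<noteq> 0" by (rule Tmon_nonzero)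
  have "x = (x * emb (Tmon \<mu>)) / emb (Tmon \<mu>)" using nz by simp
  with nz show "x \<in> quot_field (EE P r 0)" unfolding quot_field_def using A B by (intro CollectI exI conjI)
qed


lemma colon_E:
  assumes fin: "finite P"
  shows "colon (EE P r 0) (EE P r a) = (EE P r (- a) :: ('a::linorder, 'k::field) laurent fract set)"
proof
  show "colon (EE P r 0) (EE P r a) \<subseteq> (EE P r (- a) :: ('a, 'k) laurent fract set)"
  proof
    fix q :: "('a, 'k) laurent fract" assume "q \<in> colon (EE P r 0) (EE P r a)"
    hence "\<And>x. x \<in> EE P r a \<Longrightarrow> q * x \<in> EE P r 0" unfolding colon_def by blast
    from E_key[OF fin this] show "q \<in> EE P r (- a)" by simp
  qed
next
  show "(EE P r (- a) :: ('a, 'k) laurent fract set) \<subseteq> colon (EE P r 0) (EE P r a)"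
  proof
    fix q :: "('a, 'k) laurent fract" assume q: "q \<in> EE P r (- a)"
    have "\<forall>x\<in>EE P r a. q * x \<in> EE P r 0" using E_mult[OF q] by (metis add.left_inverse)
    thus "q \<in> colon (EE P r 0) (EE P r a)" using E_quot[OF fin] q unfolding colon_def by blast
  qed
qed

lemma ideal_prod_E:
  "ideal_prod (EE P r 0) (EE P r a) (EE P r b) \<subseteq> (EE P r (a + b) :: ('a::linorder, 'k::field) laurent fract set)"
proof -
  have "0 \<in> (EE P r (a + b) :: ('a, 'k) laurent fract set)" by (rule E_zero)
  moreover have "{x * y | x y. x \<in> EE P r a \<and> y \<in> (EE P r b :: ('a, 'k) laurent fract set)} \<subseteq> EE P r (a + b)"
    using E_mult by blast
  moreover have "\<forall>u\<in>EE P r (a + b). \<forall>v\<in>EE P r (a + b). u + v \<in> (EE P r (a + b) :: ('a, 'k) laurent fract set)"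
    using E_add by blast
  moreover have "\<forall>c\<in>EE P r 0. \<forall>u\<in>EE P r (a + b). c * u \<in> (EE P r (a + b) :: ('a, 'k) laurent fract set)"
    using E_mult[of _ P r 0 _ "a + b"] by (metis add_0)
  ultimately show ?thesis unfolding ideal_prod_def by blast
qed

lemma prod_in_ideal_prod: "x \<in> I \<Longrightarrow> y \<in> J \<Longrightarrow> x * y \<in> ideal_prod R I J"
  unfolding ideal_prod_def by blast

lemma colon_prod:
  assumes fin: "finite P"
  shows "colon (EE P r 0) (ideal_prod (EE P r 0) (EE P r a) (EE P r b))
       = (EE P r (- (a + b)) :: ('a::linorder, 'k::field) laurent fract set)"
proof
  show "colon (EE P r 0) (ideal_prod (EE P r 0) (EE P r a) (EE P r b))
       \<subseteq> (EE P r (- (a + b)) :: ('a, 'k) laurent fract set)"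
  proof
    fix q :: "('a, 'k) laurent fract"
    assume qc: "q \<in> colon (EE P r 0) (ideal_prod (EE P r 0) (EE P r a) (EE P r b))"
    have H: "q * (x * y) \<in> EE P r 0" if "x \<in> EE P r a" "y \<in> EE P r b" for x y
    proof -
      have "x * y \<in> ideal_prod (EE P r 0) (EE P r a) (EE P r b)"
        by (rule prod_in_ideal_prod[OF that])
      thus ?thesis using qc unfolding colon_def by blast
    qed
    have H2: "q * x \<in> EE P r (0 - b)" if "x \<in> EE P r a" for x
    proof (rule E_key[OF fin])
      fix y :: "('a, 'k) laurent fract" assume "y \<in> EE P r b"
      from H[OF that this] show "q * x * y \<in> EE P r 0" by (simp only: mult.assoc)
    qed
    have "q \<in> EE P r (0 - b - a)" by (rule E_key[OF fin H2])
    moreover have "0 - b - a = - (a + b)" by simp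
    ultimately show "q \<in> EE P r (- (a + b))" by (simp only:)
  qed
next
  show "(EE P r (- (a + b)) :: ('a, 'k) laurent fract set)
       \<subseteq> colon (EE P r 0) (ideal_prod (EE P r 0) (EE P r a) (EE P r b))"
  proof
    fix q :: "('a, 'k) laurent fract" assume q: "q \<in> EE P r (- (a + b))"
    have "q * x \<in> EE P r 0" if "x \<in> ideal_prod (EE P r 0) (EE P r a) (EE P r b)" for x
    proof -
      have "x \<in> EE P r (a + b)" using ideal_prod_E that by blast
      from E_mult[OF q this] show ?thesis by simp
    qed
    thus "q \<in> colon (EE P r 0) (ideal_prod (EE P r 0) (EE P r a) (EE P r b))"
      using E_quot[OF fin] q unfolding colon_def by blast
  qed
qed

lemma div_prod_E:
  assumes fin: "finite P"
  shows "div_prod (EE P r 0) (EE P r a) (EE P r b) = (EE P r (a + b) :: ('a::linorder, 'k::field) laurent fract set)"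
  unfolding div_prod_def by (simp add: colon_prod[OF fin] colon_E[OF fin] add.commute)

lemma div_pow_nat_E:
  assumes fin: "finite P"
  shows "div_pow_nat (EE P r 0) (EE P r s) k = (EE P r (s * int k) :: ('a::linorder, 'k::field) laurent fract set)"
  by (induction k) (simp_all add: div_prod_E[OF fin] algebra_simps)

lemma omega_pow_E:
  assumes fin: "finite P"
  shows "omega_pow P r n = (EE P r n :: ('a::linorder, 'k::field) laurent fract set)"
proof -
  have R: "ehrhart_ring P r = (EE P r 0 :: ('a, 'k) laurent fract set)" by (simp add: ehrhart_ring_def EE_def)
  have W: "canonical_ideal P r = (EE P r 1 :: ('a, 'k) laurent fract set)" by (simp add: canonical_ideal_def EE_def)
  show ?thesis
  proof (cases "n \<ge> 0")
    case True
    thus ?thesis unfolding omega_pow_def div_pow_def R W using div_pow_nat_E[OF fin, of r 1 "nat n"] by simp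
  next
    case False
    thus ?thesis unfolding omega_pow_def div_pow_def R W using div_pow_nat_E[OF fin, of r "-1" "nat (- n)"]
      by (simp add: colon_E[OF fin])
  qed
qed

theorem mainTheorem2:
  fixes P :: "'a::linorder set" and r :: "'a rel" and n :: int
    and \<xi> :: "'a option \<Rightarrow>\<^sub>0 int"
  assumes "finite P" and "partial_order_on P r"
    and "Poly_Mapping.keys \<xi> \<subseteq> Pminus P"
  shows "(emb (Tmon \<xi> :: ('a, 'k::field) laurent) \<in> omega_pow P r n \<longleftrightarrow> \<xi> \<in> Sset P r n)
       \<and> omega_pow P r n = emb ` (mon_span P r n :: ('a, 'k) laurent set)"
proof -
  have O: "omega_pow P r n = emb ` (mon_span P r n :: ('a, 'k) laurent set)"
    using omega_pow_E[OF assms(1)] by (simp add: EE_def)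
  have "emb (Tmon \<xi> :: ('a, 'k) laurent) \<in> emb ` mon_span P r n \<longleftrightarrow> \<xi> \<in> Sset P r n"
  proof
    assume "emb (Tmon \<xi> :: ('a, 'k) laurent) \<in> emb ` mon_span P r n"
    then obtain f :: "('a, 'k) laurent" where "f \<in> mon_span P r n" "emb (Tmon \<xi>) = emb f" by blast
    hence "Tmon \<xi> \<in> (mon_span P r n :: ('a, 'k) laurent set)" by (simp add: emb_inj)
    thus "\<xi> \<in> Sset P r n" by (simp add: mon_span_def keys_Tmon)
  next
    assume "\<xi> \<in> Sset P r n"
    thus "emb (Tmon \<xi> :: ('a, 'k) laurent) \<in> emb ` mon_span P r n" using Tmon_V by blast
  qed
  thus ?thesis using O by simp
qed

end
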